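(* Let $b>0$ and let $\psi(x;a,\sigma)$ be as in the context, with $\psi^{(k)}$ its $k$-th derivative in $x$. For every $k\in\mathbb{N}\cup\{0\}$ and $x\in\mathbb{R}$, $$\frac{\partial}{\partial \sigma}\Big(\frac{\psi^{(k)}(x;a,\sigma)}{\psi^{(k+1)}(x;a,\sigma)}\Big)=\frac{(a-bx)\big[\psi^{(k+1)}(x;a,\sigma)^2-\psi^{(k)}(x;a,\sigma)\psi^{(k+2)}(x;a,\sigma)\big]+b\,\psi^{(k+1)}(x;a,\sigma)\psi^{(k)}(x;a,\sigma)}{b\sigma\,\psi^{(k+1)}(x;a,\sigma)^2}>0.$$
   Context: Constants $b>0$, $\rho>0$; parameters $a\in\mathbb{R}$, $\sigma>0$. For $\beta<0$, $D_\beta(x)=\frac{e^{-x^2/4}}{\Gamma(-\beta)}\int_0^\infty t^{-\beta-1}e^{-t^2/2-xt}dt$, and $\psi(x;a,\sigma)=e^{\frac{(bx-a)^2}{2\sigma^2 b}}D_{-\rho/b}\big(-\frac{bx-a}{\sigma b}\sqrt{2b}\big)$, the positive strictly increasing fundamental solution of $\frac12\sigma^2u''+(a-bx)u'-\rho u=0$. *)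

theory Defs
  imports "HOL-Analysis.Analysis"
begin

text \<open>Parabolic cylinder function D_beta(x) for beta < 0, via its integral representation.\<close>
definition parabD :: "real \<Rightarrow> real \<Rightarrow> real" where
  "parabD \<beta> x = exp (- x\<^sup>2 / 4) / Gamma (- \<beta>) *
     (\<integral>t\<in>{0<..}. t powr (- \<beta> - 1) * exp (- t\<^sup>2 / 2 - x * t) \<partial>lborel)"

definition psi :: "real \<Rightarrow> real \<Rightarrow> real \<Rightarrow> real \<Rightarrow> real \<Rightarrow> real" where
  "psi b \<rho> a \<sigma> x = exp ((b * x - a)\<^sup>2 / (2 * \<sigma>\<^sup>2 * b)) *
     parabD (- \<rho> / b) (- (b * x - a) / (\<sigma> * b) * sqrt (2 * b))"

definition psid :: "nat \<Rightarrow> real \<Rightarrow> real \<Rightarrow> real \<Rightarrow> real \<Rightarrow> real \<Rightarrow> real" where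
  "psid k b \<rho> a \<sigma> x = (deriv ^^ k) (psi b \<rho> a \<sigma>) x"

end

theory Submission
  imports Defs "HOL-Real_Asymp.Real_Asymp"
begin
definition Mf :: "real \<Rightarrow> real \<Rightarrow> real \<Rightarrow> real" where
  "Mf p v t = t powr (p - 1) * exp (- t\<^sup>2 / 2 + v * t)"

definition MM :: "real \<Rightarrow> real \<Rightarrow> real" where
  "MM p v = (\<integral>t\<in>{0<..}. Mf p v t \<partial>lborel)"

lemma gamma_integrable:
  fixes p :: real
  assumes "p > 0"
  shows "set_integrable lborel {0<..} (\<lambda>t. t powr (p - 1) / exp t)"
proof -
  have "(\<lambda>t. t powr (p - 1) / exp t) integrable_on {0..}"
    using Gamma_integral_real[OF assms] by blast
  then have "(\<lambda>t. t powr (p - 1) / exp t) absolutely_integrable_on {0..}"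
    by (intro nonnegative_absolutely_integrable_1) auto
  then have "set_integrable lebesgue {0<..} (\<lambda>t. t powr (p - 1) / exp t)"
    by (rule set_integrable_subset) auto
  then show ?thesis
    unfolding set_integrable_def
    by (subst (asm) integrable_completion) (auto intro!: borel_measurable_continuous_on_indicator continuous_intros)
qed

lemma Mf_bound:
  assumes "t > 0"
  shows "\<bar>Mf p v t\<bar> \<le> exp ((v + 1)\<^sup>2 / 2) * (t powr (p - 1) / exp t)"
proof -
  have "- t\<^sup>2 / 2 + v * t \<le> (v + 1)\<^sup>2 / 2 + (- t)"
    using sum_power2_ge_zero[of "t - (v+1)" 0] by (simp add: power2_eq_square algebra_simps)
  then have "exp (- t\<^sup>2 / 2 + v * t) \<le> exp ((v + 1)\<^sup>2 / 2) * exp (- t)"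
    by (simp add: exp_add[symmetric])
  then show ?thesis using assms
    by (simp add: Mf_def abs_mult exp_minus field_simps)
qed

lemma Mf_integrable:
  assumes "p > 0"
  shows "set_integrable lborel {0<..} (Mf p v)"
proof (rule set_integrable_bound[OF set_integrable_mult_right[OF gamma_integrable[OF assms]]])
  show "set_borel_measurable lborel {0<..} (Mf p v)"
    unfolding set_borel_measurable_def Mf_def
    by (auto intro!: borel_measurable_continuous_on_indicator continuous_intros)
  show "AE x in lborel. x \<in> {0<..} \<longrightarrow> norm (Mf p v x) \<le> norm (exp ((v + 1)\<^sup>2 / 2) * (x powr (p - 1) / exp x))"
    using Mf_bound by auto
qed

lemma set_integral_pos_Ioi:
  fixes f :: "real \<Rightarrow> real"
  assumes int: "set_integrable lborel {0<..} f" and nn: "\<And>t. t > 0 \<Longrightarrow> f t \<ge> 0"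
    and pos: "\<And>t. t > 0 \<Longrightarrow> t \<noteq> r \<Longrightarrow> f t > 0"
  shows "(\<integral>t\<in>{0<..}. f t \<partial>lborel) > 0"
proof -
  have ge: "(\<integral>t\<in>{0<..}. f t \<partial>lborel) \<ge> 0"
    unfolding set_lebesgue_integral_def using nn
    by (intro integral_nonneg_AE) (auto simp: indicator_def)
  have "(\<integral>t\<in>{0<..}. f t \<partial>lborel) \<noteq> 0"
  proof
    assume "(\<integral>t\<in>{0<..}. f t \<partial>lborel) = 0"
    then have "integral\<^sup>L lborel (\<lambda>x. indicator {0<..} x *\<^sub>R f x) = 0"
      by (simp add: set_lebesgue_integral_def)
    then have "AE x in lborel. indicator {0<..} x *\<^sub>R f x = 0"
      using int nn by (subst (asm) integral_nonneg_eq_0_iff_AE)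
        (auto simp: set_integrable_def indicator_def)
    with AE_lborel_singleton[of r] have "AE x in lborel. x \<notin> {0<..<1::real}"
    proof eventually_elim
      case (elim x) then show ?case using pos[of x] by (auto simp: indicator_def split: if_splits)
    qed
    then have "emeasure lborel {0<..<1::real} = 0"
      by (subst (asm) AE_iff_measurable[of "{0<..<1::real}"]) auto
    then show False by simp
  qed
  with ge show ?thesis by linarith
qed

lemma MM_pos: "p > 0 \<Longrightarrow> MM p v > 0"
  unfolding MM_def
  by (rule set_integral_pos_Ioi[OF Mf_integrable, where r=0]) (auto simp: Mf_def)

lemma exp_diff_bound: fixes a b :: real shows "\<bar>exp a - exp b\<bar> \<le> \<bar>a - b\<bar> * exp (max a b)"
proof -
  have key: "exp y - exp x \<le> (y - x) * exp y" if "x \<le> y" for x y :: real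
  proof -
    have "1 + (x - y) \<le> exp (x - y)" by (rule exp_ge_add_one_self)
    then have "exp y * (1 + (x - y)) \<le> exp y * exp (x - y)" by simp
    then show ?thesis by (simp add: exp_diff algebra_simps)
  qed
  show ?thesis
  proof (cases "a \<le> b")
    case True then show ?thesis using key[OF True] by (simp add: max_def)
  next
    case False then show ?thesis using key[of b a] by (simp add: max_def)
  qed
qed

lemma Mf_deriv_v: "((\<lambda>y. Mf p y t) has_real_derivative Mf (p + 1) v t) (at v)" if "t > 0"
proof -
  have "((\<lambda>y. Mf p y t) has_real_derivative t powr (p - 1) * (exp (- t\<^sup>2 / 2 + v * t) * t)) (at v)"
    unfolding Mf_def by (auto intro!: derivative_eq_intros)
  moreover have "t powr (p - 1) * (exp (- t\<^sup>2 / 2 + v * t) * t) = Mf (p + 1) v t"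
    using that by (simp add: Mf_def powr_diff)
  ultimately show ?thesis by simp
qed

lemma Mf_quot_bound:
  assumes "t > 0" "\<bar>y - v\<bar> \<le> B" "y \<noteq> v"
  shows "\<bar>(Mf p y t - Mf p v t) / (y - v)\<bar> \<le> Mf (p + 1) (\<bar>v\<bar> + B) t"
proof -
  have "Mf p y t - Mf p v t = t powr (p - 1) * exp (- t\<^sup>2 / 2) * (exp (y * t) - exp (v * t))"
    unfolding Mf_def exp_add by (simp add: algebra_simps)
  then have "\<bar>(Mf p y t - Mf p v t) / (y - v)\<bar>
      = t powr (p - 1) * exp (- t\<^sup>2 / 2) * (\<bar>exp (y * t) - exp (v * t)\<bar> / \<bar>y - v\<bar>)"
    by (simp add: abs_mult)
  also have "\<bar>exp (y * t) - exp (v * t)\<bar> / \<bar>y - v\<bar> \<le> t * exp ((\<bar>v\<bar> + B) * t)"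
  proof -
    have "\<bar>exp (y * t) - exp (v * t)\<bar> \<le> \<bar>y * t - v * t\<bar> * exp (max (y * t) (v * t))"
      by (rule exp_diff_bound)
    also have "\<bar>y * t - v * t\<bar> = \<bar>y - v\<bar> * t" using assms by (simp add: abs_mult left_diff_distrib[symmetric])
    also have "max (y * t) (v * t) \<le> (\<bar>v\<bar> + B) * t"
      using assms by (auto simp: max_def intro!: mult_right_mono)
    then have "exp (max (y * t) (v * t)) \<le> exp ((\<bar>v\<bar> + B) * t)" by simp
    finally have "\<bar>exp (y * t) - exp (v * t)\<bar> \<le> \<bar>y - v\<bar> * t * exp ((\<bar>v\<bar> + B) * t)"
      using assms by (simp add: mult_left_mono)
    then show ?thesis using assms by (simp add: divide_le_eq mult_ac)
  qed
  then have "t powr (p - 1) * exp (- t\<^sup>2 / 2) * (\<bar>exp (y * t) - exp (v * t)\<bar> / \<bar>y - v\<bar>)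
      \<le> t powr (p - 1) * exp (- t\<^sup>2 / 2) * (t * exp ((\<bar>v\<bar> + B) * t))"
    by (intro mult_left_mono) auto
  also have "\<dots> = Mf (p + 1) (\<bar>v\<bar> + B) t"
    using assms unfolding Mf_def exp_add by (simp add: powr_diff algebra_simps)
  finally show ?thesis .
qed

lemma MM_deriv:
  assumes p: "p > 0"
  shows "(MM p has_real_derivative MM (p + 1) v) (at v)"
  unfolding has_field_derivative_iff tendsto_at_iff_sequentially
proof (intro allI impI)
  fix X :: "nat \<Rightarrow> real"
  assume X: "\<forall>i. X i \<in> UNIV - {v}" and lim: "X \<longlonglongrightarrow> v"
  have "Bseq (\<lambda>i. X i - v)" using lim by (intro convergent_imp_Bseq convergentI[OF tendsto_diff[OF lim tendsto_const]])
  then obtain B where B: "B > 0" "\<And>i. norm (X i - v) \<le> B" by (auto simp: Bseq_def)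
  define s where "s i t = indicator {0<..} t *\<^sub>R ((Mf p (X i) t - Mf p v t) / (X i - v))" for i t
  define f where "f t = indicator {0<..} t *\<^sub>R Mf (p + 1) v t" for t
  define w where "w t = indicator {0<..} t *\<^sub>R Mf (p + 1) (\<bar>v\<bar> + B) t" for t
  have eq: "(MM p (X i) - MM p v) / (X i - v) = integral\<^sup>L lborel (s i)" for i
  proof -
    have "MM p (X i) - MM p v = (\<integral>t\<in>{0<..}. (Mf p (X i) t - Mf p v t) \<partial>lborel)"
      unfolding MM_def using set_integral_diff(2)[OF Mf_integrable[OF p] Mf_integrable[OF p]] by simp
    then have "(MM p (X i) - MM p v) / (X i - v) = (\<integral>t\<in>{0<..}. (Mf p (X i) t - Mf p v t) / (X i - v) \<partial>lborel)"
      by (simp only: set_integral_divide_zero)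
    then show ?thesis by (simp only: s_def[abs_def] set_lebesgue_integral_def)
  qed
  have "(\<lambda>i. integral\<^sup>L lborel (s i)) \<longlonglongrightarrow> integral\<^sup>L lborel f"
  proof (rule integral_dominated_convergence)
    show "f \<in> borel_measurable lborel"
      unfolding f_def Mf_def by (auto intro!: borel_measurable_continuous_on_indicator continuous_intros)
    show "s i \<in> borel_measurable lborel" for i
      unfolding s_def Mf_def by (auto intro!: borel_measurable_continuous_on_indicator continuous_intros)
    show "integrable lborel w"
      using Mf_integrable[of "p + 1" "\<bar>v\<bar> + B"] p by (simp add: w_def[abs_def] set_integrable_def)
    show "AE t in lborel. (\<lambda>i. s i t) \<longlonglongrightarrow> f t"
    proof (rule AE_I2)
      fix t :: real
      show "(\<lambda>i. s i t) \<longlonglongrightarrow> f t"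
      proof (cases "t > 0")
        case True
        have "((\<lambda>y. (Mf p y t - Mf p v t) / (y - v)) \<longlongrightarrow> Mf (p + 1) v t) (at v)"
          using Mf_deriv_v[OF True, of p v] by (simp add: has_field_derivative_iff)
        then have "((\<lambda>y. (Mf p y t - Mf p v t) / (y - v)) \<circ> X) \<longlonglongrightarrow> Mf (p + 1) v t"
          using X lim unfolding tendsto_at_iff_sequentially by blast
        then show ?thesis using True by (simp add: s_def f_def o_def)
      next
        case False then show ?thesis by (simp add: s_def f_def)
      qed
    qed
    show "AE t in lborel. norm (s i t) \<le> w t" for i
    proof (rule AE_I2)
      fix t :: real
      show "norm (s i t) \<le> w t"
      proof (cases "t > 0")
        case True
        have "\<bar>X i - v\<bar> \<le> B" using B(2)[of i] by simp
        from Mf_quot_bound[OF True this] X show ?thesis using True by (simp add: s_def w_def)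
      next
        case False then show ?thesis by (simp add: s_def w_def)
      qed
    qed
  qed
  moreover have "integral\<^sup>L lborel f = MM (p + 1) v"
    by (simp add: MM_def f_def[abs_def] set_lebesgue_integral_def)
  ultimately show "((\<lambda>y. (MM p y - MM p v) / (y - v)) \<circ> X) \<longlonglongrightarrow> MM (p + 1) v"
    by (simp add: o_def eq)
qed

lemma Mf_lim_top: fixes p v :: real shows "((\<lambda>t. t powr p * exp (- t\<^sup>2 / 2 + v * t)) \<longlongrightarrow> 0) at_top"
  by real_asymp

lemma Mf_lim_0:
  fixes p v :: real assumes p: "p > 0"
  shows "((\<lambda>t. t powr p * exp (- t\<^sup>2 / 2 + v * t)) \<longlongrightarrow> 0) (at_right 0)"
proof -
  have ev: "\<forall>\<^sub>F x in at_right (0::real). 0 \<le> x"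
    using eventually_at_right_less[of "0::real"] by (rule eventually_mono) simp
  have "((\<lambda>t. t powr p) \<longlongrightarrow> 0) (at_right (0::real))"
    by (rule tendsto_zero_powrI[OF tendsto_ident_at tendsto_const ev p])
  then have "((\<lambda>t. t powr p * exp (- t\<^sup>2 / 2 + v * t)) \<longlongrightarrow> 0 * exp (- 0\<^sup>2 / 2 + v * 0)) (at_right 0)"
    by (intro tendsto_intros tendsto_ident_at) auto
  then show ?thesis by simp
qed

lemma MM_rec:
  assumes p: "p > 0"
  shows "MM (p + 2) v = v * MM (p + 1) v + p * MM p v"
proof -
  define F where "F t = t powr p * exp (- t\<^sup>2 / 2 + v * t)" for t
  define f where "f t = p * Mf p v t + v * Mf (p + 1) v t - Mf (p + 2) v t" for t
  have int: "set_integrable lborel {0<..} f"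
    unfolding f_def[abs_def] using p
    by (intro set_integral_diff(1) set_integral_add(1) set_integrable_mult_right Mf_integrable) auto
  have "(LBINT x=ereal 0..\<infinity>. f x) = 0 - 0"
  proof (rule interval_integral_FTC_integrable)
    show "ereal 0 < \<infinity>" by simp
    fix x assume x: "ereal 0 < ereal x" "ereal x < \<infinity>"
    then have x0: "x > 0" by simp
    have "(F has_real_derivative p * x powr (p - 1) * exp (- x\<^sup>2 / 2 + v * x)
            + x powr p * (exp (- x\<^sup>2 / 2 + v * x) * (- (2 * x) / 2 + v))) (at x)"
      unfolding F_def[abs_def] using x0
      by (auto intro!: derivative_eq_intros simp: power2_eq_square)
    moreover have "p * x powr (p - 1) * exp (- x\<^sup>2 / 2 + v * x)
            + x powr p * (exp (- x\<^sup>2 / 2 + v * x) * (- (2 * x) / 2 + v)) = f x"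
      using x0 by (simp add: f_def Mf_def powr_add algebra_simps)
    ultimately show "(F has_vector_derivative f x) (at x)"
      by (simp add: has_real_derivative_iff_has_vector_derivative)
    show "isCont f x"
      unfolding f_def Mf_def using x0 by (auto intro!: continuous_intros)
  next
    show "set_integrable lborel (einterval (ereal 0) \<infinity>) f" using int by simp
    show "((F \<circ> real_of_ereal) \<longlongrightarrow> 0) (at_right (ereal 0))"
      unfolding ereal_tendsto_simps F_def[abs_def] using Mf_lim_0[OF p] by simp
    show "((F \<circ> real_of_ereal) \<longlongrightarrow> 0) (at_left \<infinity>)"
      unfolding ereal_tendsto_simps F_def[abs_def] using Mf_lim_top by simp
  qed
  then have "(\<integral>t\<in>{0<..}. f t \<partial>lborel) = 0"
    by (simp add: interval_integral_to_infinity_eq)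
  moreover have "(\<integral>t\<in>{0<..}. f t \<partial>lborel) = p * MM p v + v * MM (p + 1) v - MM (p + 2) v"
    unfolding f_def[abs_def] MM_def using p
    by (subst set_integral_diff(2) set_integral_add(2), (intro set_integral_add(1) set_integrable_mult_right Mf_integrable; simp)+)+ simp
  ultimately show ?thesis by simp
qed

lemma Mf_shift: "t > 0 \<Longrightarrow> Mf p v t * t ^ k = Mf (p + real k) v t"
proof -
  assume t: "t > 0"
  have "t powr (p + real k - 1) = t powr (p - 1) * t powr real k"
    by (subst powr_add[symmetric]) (simp add: algebra_simps)
  also have "t powr real k = t ^ k" using powr_realpow[OF t] .
  finally show ?thesis by (simp add: Mf_def)
qed

lemma lin4:
  fixes f1 f2 f3 f4 :: "real \<Rightarrow> real"
  assumes "set_integrable M A f1" "set_integrable M A f2" "set_integrable M A f3" "set_integrable M A f4"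
  shows "(LINT t:A|M. f1 t - f2 t - f3 t + f4 t) = (LINT t:A|M. f1 t) - (LINT t:A|M. f2 t) - (LINT t:A|M. f3 t) + (LINT t:A|M. f4 t)"
proof -
  have "(LINT t:A|M. f1 t - f2 t - f3 t + f4 t) = (LINT t:A|M. f1 t - f2 t - f3 t) + (LINT t:A|M. f4 t)"
    using assms by (intro set_integral_add(2) set_integral_diff(1))
  also have "(LINT t:A|M. f1 t - f2 t - f3 t) = (LINT t:A|M. f1 t - f2 t) - (LINT t:A|M. f3 t)"
    using assms by (intro set_integral_diff(2) set_integral_diff(1))
  also have "(LINT t:A|M. f1 t - f2 t) = (LINT t:A|M. f1 t) - (LINT t:A|M. f2 t)"
    using assms by (intro set_integral_diff(2))
  finally show ?thesis .
qed

lemma alg: fixes m0 m1 m2 m3 :: real shows "m0 > 0 \<Longrightarrow> m3 - (m1/m0)*m2 - (m1/m0)\<^sup>2*m1 + (m1/m0)^3*m0 = (m0*m3 - m1*m2)/m0"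
  by (simp add: field_simps power2_eq_square power3_eq_cube)

lemma divpos: "0 < (C::real) / M \<Longrightarrow> M > 0 \<Longrightarrow> C > 0" using zero_less_divide_iff by (metis less_asym)

lemma MM_ineq:
  assumes p: "p > 0"
  shows "MM p v * MM (p + 3) v - MM (p + 1) v * MM (p + 2) v > 0"
proof -
  define r where "r = MM (p + 1) v / MM p v"
  have M0: "MM p v > 0" using MM_pos[OF p] .
  have M1: "MM (p + 1) v > 0" using MM_pos p by simp
  have r0: "r > 0" using M0 M1 by (simp add: r_def)
  define g where "g t = Mf (p + 3) v t - r * Mf (p + 2) v t - r\<^sup>2 * Mf (p + 1) v t + r ^ 3 * Mf p v t" for t
  have int: "set_integrable lborel {0<..} g"
    unfolding g_def[abs_def] using p
    by (intro set_integral_diff(1) set_integral_add(1) set_integrable_mult_right Mf_integrable) auto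
  have gval: "g t = Mf p v t * ((t - r)\<^sup>2 * (t + r))" if "t > 0" for t
  proof -
    have "Mf p v t * ((t - r)\<^sup>2 * (t + r)) = Mf p v t * t ^ 3 - r * (Mf p v t * t ^ 2) - r\<^sup>2 * (Mf p v t * t ^ 1) + r ^ 3 * Mf p v t"
      by (simp add: power2_eq_square power3_eq_cube algebra_simps)
    also have "\<dots> = g t"
    proof -
      have a3: "Mf p v t * t ^ 3 = Mf (p + 3) v t" using Mf_shift[OF that, of p v 3] by simp
      have a2: "Mf p v t * t ^ 2 = Mf (p + 2) v t" using Mf_shift[OF that, of p v 2] by simp
      have a1: "Mf p v t * t ^ 1 = Mf (p + 1) v t" using Mf_shift[OF that, of p v 1] by simp
      show ?thesis unfolding g_def a1 a2 a3 ..
    qed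
    finally show ?thesis by simp
  qed
  have "(\<integral>t\<in>{0<..}. g t \<partial>lborel) > 0"
  proof (rule set_integral_pos_Ioi[OF int, where r=r])
    fix t :: real assume t: "t > 0"
    have "Mf p v t > 0" using t by (simp add: Mf_def)
    then show "g t \<ge> 0" unfolding gval[OF t] using t r0 by (intro mult_nonneg_nonneg) auto
    assume "t \<noteq> r"
    then have "(t - r)\<^sup>2 > 0" by simp
    then show "g t > 0" unfolding gval[OF t] using t r0 \<open>Mf p v t > 0\<close> by (intro mult_pos_pos) auto
  qed
  moreover have "(\<integral>t\<in>{0<..}. g t \<partial>lborel) = MM (p + 3) v - r * MM (p + 2) v - r\<^sup>2 * MM (p + 1) v + r ^ 3 * MM p v"
  proof -
    have i: "set_integrable lborel {0<..} (\<lambda>t. c * Mf q v t)" if "q > 0" for q c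
      by (rule set_integrable_mult_right, rule Mf_integrable[OF that])
    have "p + 3 > 0" "p + 2 > 0" "p + 1 > 0" using p by auto
    from lin4[OF i[OF this(1), of 1] i[OF this(2), of r] i[OF this(3), of "r\<^sup>2"] i[OF p, of "r ^ 3"]]
    show ?thesis by (simp add: g_def[abs_def] MM_def)
  qed
  moreover have "MM (p + 3) v - r * MM (p + 2) v - r\<^sup>2 * MM (p + 1) v + r ^ 3 * MM p v
      = (MM p v * MM (p + 3) v - MM (p + 1) v * MM (p + 2) v) / MM p v"
    using M0 unfolding r_def by (rule alg)
  ultimately have q: "0 < (MM p v * MM (p + 3) v - MM (p + 1) v * MM (p + 2) v) / MM p v" by linarith
  show ?thesis using divpos[OF q M0] .
qed

lemma key_ineq:
  assumes p: "p > 0"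
  shows "MM p v * MM (p + 1) v - v * ((MM (p + 1) v)\<^sup>2 - MM p v * MM (p + 2) v) > 0"
proof -
  have r1: "MM (p + 2) v = v * MM (p + 1) v + p * MM p v" using MM_rec[OF p] .
  have r2: "MM (p + 3) v = v * MM (p + 2) v + (p + 1) * MM (p + 1) v"
    using MM_rec[of "p + 1" v] p by (simp add: add.assoc)
  have "MM p v * MM (p + 1) v - v * ((MM (p + 1) v)\<^sup>2 - MM p v * MM (p + 2) v)
      = MM p v * MM (p + 3) v - MM (p + 1) v * MM (p + 2) v"
    unfolding r2 by (simp add: r1 power2_eq_square algebra_simps)
  then show ?thesis using MM_ineq[OF p, of v] by linarith
qed

lemma MM_chain [derivative_intros]:
  assumes "p > 0" "(g has_real_derivative g') (at x within S)"
  shows "((\<lambda>x. MM p (g x)) has_real_derivative MM (p + 1) (g x) * g') (at x within S)"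
  using DERIV_chain2[OF MM_deriv[OF assms(1)] assms(2)] .

lemma psi_closed:
  assumes b: "b > 0"
  shows "psi b \<rho> a s = (\<lambda>x. MM (\<rho> / b) ((b * x - a) / (s * b) * sqrt (2 * b)) / Gamma (\<rho> / b))"
proof
  fix x
  define L where "L = (b * x - a) / (s * b) * sqrt (2 * b)"
  have e: "(b * x - a)\<^sup>2 / (2 * s\<^sup>2 * b) + - (- L)\<^sup>2 / 4 = 0"
  proof (cases "s = 0")
    case True then show ?thesis by (simp add: L_def)
  next
    case False
    have "(- L)\<^sup>2 = (b * x - a)\<^sup>2 / (s * b)\<^sup>2 * (sqrt (2 * b))\<^sup>2"
      by (simp add: L_def power_mult_distrib power_divide)
    also have "\<dots> = 2 * (b * x - a)\<^sup>2 / (s\<^sup>2 * b)"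
      using b False by (simp add: field_simps power2_eq_square)
    finally have L2: "(- L)\<^sup>2 = 2 * (b * x - a)\<^sup>2 / (s\<^sup>2 * b)" .
    show ?thesis unfolding L2 using b False by (simp add: field_simps)
  qed
  have i: "(\<integral>t\<in>{0<..}. t powr (- (- \<rho> / b) - 1) * exp (- t\<^sup>2 / 2 - - L * t) \<partial>lborel) = MM (\<rho> / b) L"
    unfolding MM_def Mf_def by simp
  have y: "- (b * x - a) / (s * b) * sqrt (2 * b) = - L"
    unfolding L_def by (simp only: minus_divide_left[symmetric] mult_minus_left)
  have g: "Gamma (- (- \<rho> / b)) = Gamma (\<rho> / b)" by simp
  have "psi b \<rho> a s x = exp ((b * x - a)\<^sup>2 / (2 * s\<^sup>2 * b)) * (exp (- (- L)\<^sup>2 / 4) / Gamma (\<rho> / b) * MM (\<rho> / b) L)"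
    unfolding psi_def y parabD_def i g ..
  also have "\<dots> = (exp ((b * x - a)\<^sup>2 / (2 * s\<^sup>2 * b)) * exp (- (- L)\<^sup>2 / 4)) * MM (\<rho> / b) L / Gamma (\<rho> / b)"
    by (simp only: divide_inverse ac_simps)
  also have "exp ((b * x - a)\<^sup>2 / (2 * s\<^sup>2 * b)) * exp (- (- L)\<^sup>2 / 4) = 1"
    using e by (simp only: exp_add[symmetric] exp_zero)
  finally show "psi b \<rho> a s x = MM (\<rho> / b) ((b * x - a) / (s * b) * sqrt (2 * b)) / Gamma (\<rho> / b)"
    by (simp add: L_def)
qed

lemma psid_closed:
  assumes b: "b > 0" and \<rho>: "\<rho> > 0"
  shows "psid k b \<rho> a s = (\<lambda>x. (sqrt (2 * b) / s) ^ k * MM (\<rho> / b + real k) ((b * x - a) / (s * b) * sqrt (2 * b)) / Gamma (\<rho> / b))"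
proof (induction k)
  case 0
  then show ?case by (simp add: psid_def psi_closed[OF b])
next
  case (Suc k)
  have q: "\<rho> / b + real k > 0" using b \<rho> by (simp add: add_pos_nonneg)
  have dL: "b / (s * b) * sqrt (2 * b) = sqrt (2 * b) / s" using b by simp
  have pk: "psid k b \<rho> a s = (deriv ^^ k) (psi b \<rho> a s)"
    by (rule ext) (simp add: psid_def)
  have "psid (Suc k) b \<rho> a s = deriv (psid k b \<rho> a s)"
    by (rule ext) (simp add: psid_def pk)
  also have "\<dots> = (\<lambda>x. (sqrt (2 * b) / s) ^ Suc k * MM (\<rho> / b + real (Suc k)) ((b * x - a) / (s * b) * sqrt (2 * b)) / Gamma (\<rho> / b))"
  proof
    fix x
    have "((\<lambda>x. (sqrt (2 * b) / s) ^ k * MM (\<rho> / b + real k) ((b * x - a) / (s * b) * sqrt (2 * b)) / Gamma (\<rho> / b))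
       has_real_derivative (sqrt (2 * b) / s) ^ k * (MM (\<rho> / b + real k + 1) ((b * x - a) / (s * b) * sqrt (2 * b)) * (b / (s * b) * sqrt (2 * b))) / Gamma (\<rho> / b)) (at x)"
    proof -
      have "((\<lambda>x. b * x - a) has_real_derivative b) (at x)"
        by (auto intro!: derivative_eq_intros)
      from DERIV_cmult_right[OF DERIV_cdivide[OF this, of "s * b"], of "sqrt (2 * b)"]
      have "((\<lambda>x. (b * x - a) / (s * b) * sqrt (2 * b)) has_real_derivative b / (s * b) * sqrt (2 * b)) (at x)" .
      from DERIV_cdivide[OF DERIV_cmult[OF MM_chain[OF q this]], of "(sqrt (2 * b) / s) ^ k" "Gamma (\<rho> / b)"]
      show ?thesis by simp
    qed
    then show "deriv (psid k b \<rho> a s) x = (sqrt (2 * b) / s) ^ Suc k * MM (\<rho> / b + real (Suc k)) ((b * x - a) / (s * b) * sqrt (2 * b)) / Gamma (\<rho> / b)"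
      unfolding Suc.IH dL
    proof (subst DERIV_imp_deriv)
      have e: "\<rho> / b + real k + 1 = \<rho> / b + real (Suc k)" by simp
      show "(sqrt (2 * b) / s) ^ k * (MM (\<rho> / b + real k + 1) ((b * x - a) / (s * b) * sqrt (2 * b)) * (sqrt (2 * b) / s)) / Gamma (\<rho> / b) =
        (sqrt (2 * b) / s) ^ Suc k * MM (\<rho> / b + real (Suc k)) ((b * x - a) / (s * b) * sqrt (2 * b)) / Gamma (\<rho> / b)"
        unfolding e power_Suc by (simp only: mult_ac)
    qed
  qed
  finally show ?case .
qed

lemma algT0:
  fixes c \<sigma> b G m0 m1 m2 y P :: real
  assumes "c > 0" "\<sigma> > 0" "b > 0" "G > 0" "m1 > 0" "P > 0"
  shows "(-(y * \<sigma>*b/c) * ((c/\<sigma>*P*m1/G)\<^sup>2 - (P*m0/G)*(c/\<sigma>*(c/\<sigma>*P)*m2/G)) + b*(c/\<sigma>*P*m1/G)*(P*m0/G)) / (b*\<sigma>*(c/\<sigma>*P*m1/G)\<^sup>2)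
     = (m0*m1 - y * (m1\<^sup>2 - m0*m2))/(c*m1\<^sup>2)"
  using assms by (simp add: field_simps power2_eq_square)

theorem lemma5p4:
  fixes b \<rho> a \<sigma> x :: real and k :: nat
  assumes "b > 0" and "\<rho> > 0" and "\<sigma> > 0"
  shows "((\<lambda>s. psid k b \<rho> a s x / psid (Suc k) b \<rho> a s x) has_real_derivative
           ((a - b * x) * ((psid (Suc k) b \<rho> a \<sigma> x)\<^sup>2
                            - psid k b \<rho> a \<sigma> x * psid (Suc (Suc k)) b \<rho> a \<sigma> x)
            + b * psid (Suc k) b \<rho> a \<sigma> x * psid k b \<rho> a \<sigma> x)
           / (b * \<sigma> * (psid (Suc k) b \<rho> a \<sigma> x)\<^sup>2)) (at \<sigma>)
     \<and> ((a - b * x) * ((psid (Suc k) b \<rho> a \<sigma> x)\<^sup>2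
                            - psid k b \<rho> a \<sigma> x * psid (Suc (Suc k)) b \<rho> a \<sigma> x)
            + b * psid (Suc k) b \<rho> a \<sigma> x * psid k b \<rho> a \<sigma> x)
           / (b * \<sigma> * (psid (Suc k) b \<rho> a \<sigma> x)\<^sup>2) > 0"
proof -
  note b = assms(1) and \<rho> = assms(2) and \<sigma> = assms(3)
  define c where "c = sqrt (2 * b)"
  define G where "G = Gamma (\<rho> / b)"
  define q where "q = \<rho> / b + real k"
  define w where "w = (b * x - a) / b * c"
  define v where "v = w / \<sigma>"
  define m0 where "m0 = MM q v"
  define m1 where "m1 = MM (q + 1) v"
  define m2 where "m2 = MM (q + 2) v"
  have c: "c > 0" using b by (simp add: c_def)
  have G: "G > 0" using b \<rho> by (simp add: G_def Gamma_real_pos)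
  have q: "q > 0" using b \<rho> by (simp add: q_def add_pos_nonneg)
  have m0: "m0 > 0" using MM_pos q by (simp add: m0_def)
  have m1: "m1 > 0" using MM_pos q by (simp add: m1_def)
  have L: "(b * x - a) / (s * b) * c = w / s" for s
    using b by (cases "s = 0") (simp_all add: w_def field_simps)
  have pv: "psid j b \<rho> a s x = (c / s) ^ j * MM (\<rho> / b + real j) (w / s) / G" for j s
    using fun_cong[OF psid_closed[OF b \<rho>, of j a s], of x] by (simp only: c_def[symmetric] G_def[symmetric] L)
  have e1: "\<rho> / b + real (Suc k) = q + 1" by (simp add: q_def)
  have e2: "\<rho> / b + real (Suc (Suc k)) = q + 2" by (simp add: q_def)
  have P0: "psid k b \<rho> a \<sigma> x = (c / \<sigma>) ^ k * m0 / G"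
    using pv[of k \<sigma>] by (simp add: m0_def q_def v_def)
  have P1: "psid (Suc k) b \<rho> a \<sigma> x = (c / \<sigma>) ^ Suc k * m1 / G"
    using pv[of "Suc k" \<sigma>] unfolding e1 m1_def v_def .
  have P2: "psid (Suc (Suc k)) b \<rho> a \<sigma> x = (c / \<sigma>) ^ Suc (Suc k) * m2 / G"
    using pv[of "Suc (Suc k)" \<sigma>] unfolding e2 m2_def v_def .
  have R: "(\<lambda>s. psid k b \<rho> a s x / psid (Suc k) b \<rho> a s x) = (\<lambda>s. s / c * MM q (w / s) / MM (q + 1) (w / s))"
  proof
    fix s :: real
    show "psid k b \<rho> a s x / psid (Suc k) b \<rho> a s x = s / c * MM q (w / s) / MM (q + 1) (w / s)"
    proof (cases "s = 0")
      case True then show ?thesis by (simp add: pv)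
    next
      case False
      have "MM (q + 1) (w / s) > 0" using MM_pos q by simp
      then show ?thesis using False c G unfolding pv e1 q_def[symmetric] by (simp add: field_simps)
    qed
  qed
  define E where "E = (m0 * m1 - v * (m1\<^sup>2 - m0 * m2)) / (c * m1\<^sup>2)"
  have D: "((\<lambda>s. s / c * MM q (w / s) / MM (q + 1) (w / s)) has_real_derivative E) (at \<sigma>)"
  proof -
    have wv: "w = v * \<sigma>" using \<sigma> by (simp add: v_def)
    have mm2: "MM (2 + q) v = m2" by (simp add: m2_def add.commute)
    have mm1: "MM (1 + q) v = m1" by (simp add: m1_def add.commute)
    show ?thesis
      using q \<sigma> c m1 by (auto intro!: derivative_eq_intros simp: E_def wv m0_def[symmetric] m1_def[symmetric] m2_def[symmetric] mm2 mm1 field_simps power2_eq_square)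
  qed
  have T: "((a - b * x) * ((psid (Suc k) b \<rho> a \<sigma> x)\<^sup>2
                            - psid k b \<rho> a \<sigma> x * psid (Suc (Suc k)) b \<rho> a \<sigma> x)
            + b * psid (Suc k) b \<rho> a \<sigma> x * psid k b \<rho> a \<sigma> x)
           / (b * \<sigma> * (psid (Suc k) b \<rho> a \<sigma> x)\<^sup>2) = E"
  proof -
    have Ax: "a - b * x = -(v * \<sigma> * b / c)" using b c \<sigma> by (simp add: v_def w_def field_simps)
    have Pp: "(c / \<sigma>) ^ k > 0" using c \<sigma> by simp
    show ?thesis unfolding P0 P1 P2 power_Suc Ax E_def
      by (rule algT0[OF c \<sigma> b G m1 Pp])
  qed
  have pos: "E > 0"
    using key_ineq[OF q, of v] c m1 by (simp add: E_def m0_def m1_def m2_def)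
  show ?thesis using D pos unfolding R T by simp
qed

end
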